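(* Let $k\ge2$ and $T\ge3$ be integers, and let $a_1,\dots,a_k$ and $b_1,\dots,b_k$ be positive integers with $a_1=b_k=1$ and $a_ib_i\le T$ for all $i$. Set $\Delta=\sum_{i=1}^k a_ib_i$ and $N=\sum_{1\le i\le j\le k}a_ib_j$. Then \[\Delta\le\sqrt{32\,N\,T\ln T}.\] Moreover, this bound is tight up to constant factors. *)

theory Defs
  imports Complex_Main
begin

definition admissible :: "nat \<Rightarrow> nat \<Rightarrow> (nat \<Rightarrow> nat) \<Rightarrow> (nat \<Rightarrow> nat) \<Rightarrow> bool" where
  "admissible k T a b \<longleftrightarrow> k \<ge> 2 \<and> T \<ge> 3 \<and>
     (\<forall>i\<in>{1..k}. a i > 0 \<and> b i > 0 \<and> a i * b i \<le> T) \<and> a 1 = 1 \<and> b k = 1"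

definition Delta :: "nat \<Rightarrow> (nat \<Rightarrow> nat) \<Rightarrow> (nat \<Rightarrow> nat) \<Rightarrow> nat" where
  "Delta k a b = (\<Sum>i=1..k. a i * b i)"

definition NN :: "nat \<Rightarrow> (nat \<Rightarrow> nat) \<Rightarrow> (nat \<Rightarrow> nat) \<Rightarrow> nat" where
  "NN k a b = (\<Sum>j=1..k. \<Sum>i=1..j. a i * b j)"

end

theory Submission
  imports Defs "HOL-Analysis.Analysis" "HOL-Library.Discrete_Functions"
begin

lemma bucket_bound:
  fixes a b :: "nat \<Rightarrow> nat" and S :: "nat set" and T :: real
  assumes fin: "finite S" and xT: "\<forall>i\<in>S. real (a i * b i) \<le> T"
    and ab: "\<forall>i\<in>S. \<forall>j\<in>S. a j \<le> 2 * a i"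
  shows "(\<Sum>l\<in>S. real (a l * b l))\<^sup>2 \<le>
     4 * T * (\<Sum>i\<in>S. \<Sum>j\<in>S. if i \<le> j then real (a i * b j) else 0)"
proof -
  define h where "h i j = (if i \<le> j then real (a i * b j) else 0)" for i j
  have key: "real (a i * b i) * real (a j * b j) \<le> 2 * T * (h i j + h j i)"
    if i: "i \<in> S" and j: "j \<in> S" for i j
  proof (cases "i \<le> j")
    case True
    have "real (a i * b i) * real (a j * b j) \<le> T * real (a j * b j)"
      using xT i by (intro mult_right_mono) auto
    also have "\<dots> \<le> T * (2 * real (a i * b j))"
    proof -
      have "a j * b j \<le> 2 * a i * b j" using ab i j by (simp add: mult_right_mono)
      then have "real (a j * b j) \<le> 2 * real (a i * b j)"
        by (metis of_nat_le_iff of_nat_mult of_nat_numeral mult.assoc)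
      moreover have "T \<ge> 0" using xT i by (meson of_nat_0_le_iff order_trans)
      ultimately show ?thesis by (intro mult_left_mono) auto
    qed
    also have "\<dots> \<le> 2 * T * (h i j + h j i)"
    proof -
      have "h j i \<ge> 0" unfolding h_def by auto
      moreover have "T \<ge> 0" using xT i by (meson of_nat_0_le_iff order_trans)
      ultimately show ?thesis using True unfolding h_def
        by (simp add: algebra_simps mult_nonneg_nonneg)
    qed
    finally show ?thesis .
  next
    case False
    have "real (a i * b i) * real (a j * b j) \<le> real (a i * b i) * T"
      using xT j by (intro mult_left_mono) auto
    also have "\<dots> \<le> (2 * real (a j * b i)) * T"
    proof -
      have "a i * b i \<le> 2 * a j * b i" using ab i j by (simp add: mult_right_mono)
      then have "real (a i * b i) \<le> 2 * real (a j * b i)"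
        by (metis of_nat_le_iff of_nat_mult of_nat_numeral mult.assoc)
      moreover have "T \<ge> 0" using xT i by (meson of_nat_0_le_iff order_trans)
      ultimately show ?thesis by (intro mult_right_mono) auto
    qed
    also have "\<dots> \<le> 2 * T * (h i j + h j i)"
    proof -
      have "h i j \<ge> 0" unfolding h_def by auto
      moreover have "T \<ge> 0" using xT i by (meson of_nat_0_le_iff order_trans)
      ultimately show ?thesis using False unfolding h_def
        by (simp add: algebra_simps mult_nonneg_nonneg)
    qed
    finally show ?thesis .
  qed
  have "(\<Sum>l\<in>S. real (a l * b l))\<^sup>2 =
        (\<Sum>i\<in>S. \<Sum>j\<in>S. real (a i * b i) * real (a j * b j))"
    by (simp add: power2_eq_square sum_product)
  also have "\<dots> \<le> (\<Sum>i\<in>S. \<Sum>j\<in>S. 2 * T * (h i j + h j i))"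
    using key by (intro sum_mono) auto
  also have "\<dots> = 2 * T * ((\<Sum>i\<in>S. \<Sum>j\<in>S. h i j) + (\<Sum>i\<in>S. \<Sum>j\<in>S. h j i))"
    by (simp only: sum_distrib_left[symmetric] sum.distrib)
  also have "(\<Sum>i\<in>S. \<Sum>j\<in>S. h j i) = (\<Sum>i\<in>S. \<Sum>j\<in>S. h i j)"
    by (rule sum.swap)
  finally show ?thesis unfolding h_def by simp
qed

lemma NN_real:
  "real (NN k a b) = (\<Sum>i\<in>{1..k}. \<Sum>j\<in>{1..k}. if i \<le> j then real (a i * b j) else 0)"
proof -
  have "real (NN k a b) = (\<Sum>j\<in>{1..k}. \<Sum>i\<in>{1..j}. real (a i * b j))"
    unfolding NN_def by simp
  also have "\<dots> = (\<Sum>j\<in>{1..k}. \<Sum>i\<in>{1..k}. if i \<le> j then real (a i * b j) else 0)"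
  proof (rule sum.cong[OF refl])
    fix j assume "j \<in> {1..k}"
    then have "{i \<in> {1..k}. i \<le> j} = {1..j}" by auto
    moreover have "(\<Sum>i\<in>{1..k}. if i \<le> j then real (a i * b j) else 0)
        = (\<Sum>i\<in>{i \<in> {1..k}. i \<le> j}. real (a i * b j))"
      by (rule sum.inter_filter[symmetric]) simp
    ultimately show "(\<Sum>i\<in>{1..j}. real (a i * b j)) =
        (\<Sum>i\<in>{1..k}. if i \<le> j then real (a i * b j) else 0)"
      by simp
  qed
  also have "\<dots> = (\<Sum>i\<in>{1..k}. \<Sum>j\<in>{1..k}. if i \<le> j then real (a i * b j) else 0)"
    by (rule sum.swap)
  finally show ?thesis .
qed

lemma part1:
  assumes adm: "admissible k T a b"
  shows "real (Delta k a b) \<le> sqrt (32 * real (NN k a b) * real T * ln (real T))"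
proof -
  let ?I = "{1..k}"
  define x where "x l = real (a l * b l)" for l
  define f where "f l = floor_log (a l)" for l
  define q where "q = Suc (floor_log T)"
  define S where "S t = {l \<in> ?I. f l = t}" for t
  define H where "H A = (\<Sum>i\<in>A. \<Sum>j\<in>A. if i \<le> j then real (a i * b j) else 0)" for A
  have T3: "T \<ge> 3" and pos: "\<And>i. i \<in> ?I \<Longrightarrow> a i > 0 \<and> b i > 0 \<and> a i * b i \<le> T"
    using adm unfolding admissible_def by auto
  have aT: "a i \<le> T" if "i \<in> ?I" for i
  proof -
    have "1 \<le> b i" using pos[OF that] by simp
    then have "a i * 1 \<le> a i * b i" by (rule mult_le_mono2)
    then show ?thesis using pos[OF that] by linarith
  qed
  have fq: "f ` ?I \<subseteq> {..<q}"
    using aT floor_log_le_iff unfolding f_def q_def by (auto simp: less_Suc_eq_le)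
  have D: "real (Delta k a b) = (\<Sum>t<q. \<Sum>l\<in>S t. x l)"
    unfolding Delta_def x_def S_def of_nat_sum
    using sum.group[OF finite_atLeastAtMost finite_lessThan fq, of "\<lambda>l. real (a l * b l)"]
    by (simp add: conj_commute)
  have Dt: "(\<Sum>l\<in>S t. x l)\<^sup>2 \<le> 4 * real T * H (S t)" for t
    unfolding x_def H_def
  proof (rule bucket_bound)
    show "finite (S t)" unfolding S_def by simp
    show "\<forall>i\<in>S t. real (a i * b i) \<le> real T"
    proof
      fix i assume "i \<in> S t"
      then have "a i * b i \<le> T" using pos unfolding S_def by auto
      then show "real (a i * b i) \<le> real T" by (simp only: of_nat_le_iff)
    qed
    show "\<forall>i\<in>S t. \<forall>j\<in>S t. a j \<le> 2 * a i"
    proof (intro ballI)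
      fix i j assume i: "i \<in> S t" and j: "j \<in> S t"
      have "2 ^ t \<le> a i" using i pos floor_log_exp2_le unfolding S_def f_def by force
      moreover have "a j < 2 * 2 ^ t" using j floor_log_exp2_gt unfolding S_def f_def by force
      ultimately show "a j \<le> 2 * a i" by linarith
    qed
  qed
  have Hsub: "H (S t) \<le> (\<Sum>i\<in>S t. \<Sum>j\<in>?I. if i \<le> j then real (a i * b j) else 0)" for t
    unfolding H_def
    by (intro sum_mono sum_mono2) (auto simp: S_def)
  have HI: "(\<Sum>t<q. H (S t)) \<le> H ?I"
  proof -
    have "(\<Sum>t<q. H (S t)) \<le>
        (\<Sum>t<q. \<Sum>i\<in>S t. \<Sum>j\<in>?I. if i \<le> j then real (a i * b j) else 0)"
      using Hsub by (intro sum_mono) auto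
    also have "\<dots> = H ?I"
      unfolding H_def S_def
      using sum.group[OF finite_atLeastAtMost finite_lessThan fq,
          of "\<lambda>i. \<Sum>j\<in>?I. if i \<le> j then real (a i * b j) else 0"]
      by (simp add: conj_commute)
    finally show ?thesis .
  qed
  have NI: "real (NN k a b) = H ?I" unfolding H_def by (rule NN_real)
  have "(real (Delta k a b))\<^sup>2 \<le> (\<Sum>t<q. (\<Sum>l\<in>S t. x l)\<^sup>2) * real q"
    unfolding D using sum_squared_le_sum_of_squares[of "\<lambda>t. \<Sum>l\<in>S t. x l" "{..<q}"]
    by simp
  also have "\<dots> \<le> (\<Sum>t<q. 4 * real T * H (S t)) * real q"
    using Dt by (intro mult_right_mono sum_mono) auto
  also have "\<dots> = 4 * real T * real q * (\<Sum>t<q. H (S t))"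
    by (simp add: sum_distrib_left[symmetric] sum_distrib_right[symmetric] algebra_simps)
  also have "\<dots> \<le> 4 * real T * real q * real (NN k a b)"
    using HI NI by (intro mult_left_mono) auto
  also have "\<dots> \<le> 4 * real T * (8 * ln (real T)) * real (NN k a b)"
  proof -
    have lnT1: "1 \<le> ln (real T)"
      using exp_le T3 by (subst ln_ge_iff) auto
    have "2 ^ floor_log T \<le> T" using T3 by (intro floor_log_exp2_le) auto
    then have "(2::real) ^ floor_log T \<le> real T"
      by (metis of_nat_le_iff of_nat_numeral of_nat_power)
    then have "ln ((2::real) ^ floor_log T) \<le> ln (real T)" using T3 by simp
    then have "real (floor_log T) * ln 2 \<le> ln (real T)" by (simp add: ln_realpow)
    moreover have "2/3 \<le> ln (2::real)" by (rule ln2_ge_two_thirds)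
    ultimately have "real (floor_log T) * (2/3) \<le> ln (real T)"
      by (meson mult_left_mono of_nat_0_le_iff order_trans)
    then have "real q \<le> 8 * ln (real T)" unfolding q_def using lnT1 by simp
    then show ?thesis by (intro mult_right_mono mult_left_mono) auto
  qed
  finally have sq: "(real (Delta k a b))\<^sup>2 \<le> 32 * real (NN k a b) * real T * ln (real T)"
    by (simp add: algebra_simps)
  show ?thesis
    by (rule real_le_rsqrt) (use sq in simp)
qed


lemma geom_sum_lt: "(\<Sum>i\<in>{1..j}. (2::nat) ^ (i - 1)) < 2 ^ j"
proof (induction j)
  case 0
  then show ?case by simp
next
  case (Suc j)
  have "(\<Sum>i\<in>{1..Suc j}. (2::nat) ^ (i - 1)) = (\<Sum>i\<in>{1..j}. (2::nat) ^ (i - 1)) + 2 ^ j"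
    by simp
  also have "\<dots> < 2 ^ j + 2 ^ j" using Suc by simp
  finally show ?case by simp
qed

lemma part2:
  assumes T3: "(T::nat) \<ge> 3"
  shows "\<exists>k a b. admissible k T a b \<and>
           real (Delta k a b) \<ge> (1/2) * sqrt (real (NN k a b) * real T * ln (real T))"
proof -
  define m where "m = floor_log T"
  define k where "k = Suc m"
  define a :: "nat \<Rightarrow> nat" where "a i = 2 ^ (i - 1)" for i
  define b :: "nat \<Rightarrow> nat" where "b i = 2 ^ (k - i)" for i
  have mT: "2 ^ m \<le> T" unfolding m_def using T3 by (intro floor_log_exp2_le) auto
  have Tm: "T < 2 * 2 ^ m" unfolding m_def by (rule floor_log_exp2_gt)
  have m1: "m \<ge> 1"
  proof -
    have "floor_log 2 \<le> floor_log T" using T3 by (intro floor_log_le_iff) auto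
    then show ?thesis unfolding m_def by (simp add: floor_log_rec)
  qed
  have prod: "a i * b i = 2 ^ m" if "i \<in> {1..k}" for i
  proof -
    have "i - 1 + (k - i) = m" using that unfolding k_def by auto
    then show ?thesis unfolding a_def b_def by (metis power_add)
  qed
  have adm: "admissible k T a b"
    unfolding admissible_def using T3 m1 prod mT
    by (auto simp: k_def a_def b_def)
  have Dk: "Delta k a b = k * 2 ^ m"
    unfolding Delta_def using prod by simp
  have Nk: "NN k a b \<le> k * 2 ^ k"
  proof -
    have "(\<Sum>i=1..j. a i * b j) \<le> 2 ^ k" if j: "j \<in> {1..k}" for j
    proof -
      have "(\<Sum>i=1..j. a i * b j) = (\<Sum>i=1..j. (2::nat) ^ (i - 1)) * 2 ^ (k - j)"
        unfolding a_def b_def by (simp add: sum_distrib_right)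
      also have "\<dots> \<le> 2 ^ j * 2 ^ (k - j)"
        using geom_sum_lt[of j] by (intro mult_right_mono) auto
      also have "\<dots> = 2 ^ k" using j by (simp flip: power_add)
      finally show ?thesis .
    qed
    then have "NN k a b \<le> (\<Sum>j=1..k. (2::nat) ^ k)"
      unfolding NN_def by (intro sum_mono) auto
    then show ?thesis by simp
  qed
  have lnk: "ln (real T) \<le> real k"
  proof -
    have "real T < 2 ^ k" using Tm unfolding k_def
      by (metis of_nat_less_iff of_nat_numeral of_nat_power power_Suc)
    then have "ln (real T) < ln ((2::real) ^ k)" using T3 by simp
    also have "\<dots> = real k * ln 2" by (simp add: ln_realpow)
    also have "\<dots> \<le> real k * 1"
      using ln2_le_25_over_36 by (intro mult_left_mono) auto
    finally show ?thesis by simp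
  qed
  have RN: "real (NN k a b) \<le> 2 * real k * 2 ^ m"
  proof -
    have "real (NN k a b) \<le> real (k * 2 ^ k)" using Nk by (simp only: of_nat_le_iff)
    then show ?thesis unfolding k_def by (simp add: algebra_simps)
  qed
  have RT: "real T \<le> 2 * 2 ^ m"
  proof -
    have "real T \<le> real (2 * 2 ^ m)" using Tm by (simp only: of_nat_le_iff)
    then show ?thesis by simp
  qed
  have lnT0: "0 \<le> ln (real T)" using T3 by simp
  have "real (NN k a b) * real T * ln (real T) \<le> (2 * real k * 2 ^ m) * (2 * 2 ^ m) * real k"
    using RN RT lnk lnT0 by (intro mult_mono) auto
  also have "\<dots> = (2 * (real k * 2 ^ m))\<^sup>2" by (simp add: power2_eq_square algebra_simps)
  finally have "sqrt (real (NN k a b) * real T * ln (real T)) \<le> 2 * (real k * 2 ^ m)"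
    by (simp add: real_sqrt_le_iff real_le_lsqrt)
  then have "(1/2) * sqrt (real (NN k a b) * real T * ln (real T)) \<le> real (Delta k a b)"
    unfolding Dk by simp
  then show ?thesis using adm by blast
qed

theorem lemma3:
  shows "(\<forall>k T a b. admissible k T a b \<longrightarrow>
            real (Delta k a b) \<le> sqrt (32 * real (NN k a b) * real T * ln (real T)))
       \<and> (\<exists>c::real. c > 0 \<and> (\<forall>T::nat. T \<ge> 3 \<longrightarrow>
            (\<exists>k a b. admissible k T a b \<and>
               real (Delta k a b) \<ge> c * sqrt (real (NN k a b) * real T * ln (real T)))))"
proof
  show "\<forall>k T a b. admissible k T a b \<longrightarrow>
            real (Delta k a b) \<le> sqrt (32 * real (NN k a b) * real T * ln (real T))"
    using part1 by blast
  show "\<exists>c::real. c > 0 \<and> (\<forall>T::nat. T \<ge> 3 \<longrightarrow>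
            (\<exists>k a b. admissible k T a b \<and>
               real (Delta k a b) \<ge> c * sqrt (real (NN k a b) * real T * ln (real T))))"
    by (rule exI[of _ "1/2"]) (use part2 in auto)
qed

end
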